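(* Let $G$ be the complete graph on $\{0,\dots,n\}$ oriented by $i\to j$ iff $i<j$. Then the polynomials $\mathbf{P}_s$, $s\in S_n$, form a basis of the space $$\operatorname{soc}(\mathcal{P}(G)):=\operatorname{span}\{p_{G\setminus T}: T\in\mathbb{B}(G)\}\subset\mathbb{R}[t(1),\dots,t(n)].$$
   Context: Polynomials are in variables $t=(t(1),\dots,t(n))$, and set $t(0):=0$. To the edge of $G$ between $i<j$ (vector $e_j-e_i$, $e_0:=0$) associate $p_x(t)=t(j)-t(i)$; for a set $Y$ of edges oriented as in $G$, $p_Y:=\prod_{x\in Y}p_x$. $\mathbb{B}(G)$ is the set of spanning trees of $G$ (edge sets), and $G\setminus T$ is the set of edges of $G$ not in $T$. $S_n$ is the set of permutations of $\{1,\dots,n\}$, extended by $s(0):=0$. For $s\in S_n$, $G^s$ is the reorientation of $G$ in which the edge $\{s(i),s(j)\}$ with $i<j$ is oriented $s(i)\to s(j)$, with associated polynomial $t(s(j))-t(s(i))$. The path tree $T_s$ has edges $\{s(k-1),s(k)\}$, $k=1,\dots,n$. Define $\mathbf{P}_s:=\prod (t(s(j))-t(s(i)))$, the product over all pairs $0\le i<j\le n$ such that $\{s(i),s(j)\}$ is not an edge of $T_s$ (i.e. $j\ne i+1$); this is $p$ of $G^s\setminus T_s$ with edges oriented as in $G^s$. *)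

theory Defs
  imports Complex_Main "HOL-Library.Poly_Mapping" "HOL-Combinatorics.Permutations"
begin

text \<open>Real polynomials in the variables t(1), t(2), ...: finitely supported maps from
  monomials (finitely supported exponent vectors) to real coefficients.\<close>
type_synonym rpoly = "(nat \<Rightarrow>\<^sub>0 nat) \<Rightarrow>\<^sub>0 real"

text \<open>The variable t(i); by convention t(0) = 0.\<close>
definition tvar :: "nat \<Rightarrow> rpoly" where
  "tvar i = (if i = 0 then 0 else Poly_Mapping.single (Poly_Mapping.single i 1) 1)"

definition pscale :: "real \<Rightarrow> rpoly \<Rightarrow> rpoly" where
  "pscale c p = Poly_Mapping.single 0 c * p"

abbreviation pspan :: "rpoly set \<Rightarrow> rpoly set" where
  "pspan \<equiv> module.span pscale"

abbreviation pdependent :: "rpoly set \<Rightarrow> bool" where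
  "pdependent \<equiv> module.dependent pscale"

definition cedges :: "nat \<Rightarrow> (nat \<times> nat) set" where
  "cedges n = {(i, j). i < j \<and> j \<le> n}"

definition connects :: "(nat \<times> nat) set \<Rightarrow> nat \<Rightarrow> nat \<Rightarrow> bool" where
  "connects T u v \<longleftrightarrow> (u, v) \<in> (T \<union> T\<inverse>)\<^sup>*"

text \<open>Spanning trees of the complete graph on {0..n}: edge sets which connect all vertices
  and are acyclic (no edge lies on a cycle, i.e. removing any edge disconnects its endpoints).\<close>
definition spanning_tree :: "nat \<Rightarrow> (nat \<times> nat) set \<Rightarrow> bool" where
  "spanning_tree n T \<longleftrightarrow> T \<subseteq> cedges n
     \<and> (\<forall>u\<in>{0..n}. \<forall>v\<in>{0..n}. connects T u v)
     \<and> (\<forall>(i, j)\<in>T. \<not> connects (T - {(i, j)}) i j)"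

definition pY :: "(nat \<times> nat) set \<Rightarrow> rpoly" where
  "pY Y = (\<Prod>(i, j)\<in>Y. tvar j - tvar i)"

definition Ps :: "nat \<Rightarrow> (nat \<Rightarrow> nat) \<Rightarrow> rpoly" where
  "Ps n s = (\<Prod>(i, j)\<in>{(i, j). i < j \<and> j \<le> n \<and> j \<noteq> i + 1}. tvar (s j) - tvar (s i))"

end

theory Submission
  imports Defs "HOL-Computational_Algebra.Polynomial"
begin


lemma pscale_module: "module pscale"
  by unfold_locales
    (simp_all add: pscale_def single_add distrib_left distrib_right mult_single mult.assoc[symmetric])

interpretation pm: module pscale by (rule pscale_module)

lemma pscale_minus1: "pscale (-1) p = - p"
  by (simp add: pscale_def single_uminus)

lemma pscale_comm: "pscale c (q * p) = q * pscale c p"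
  by (simp add: pscale_def mult.left_commute)

definition mon :: "(nat \<Rightarrow> real poly) \<Rightarrow> (nat \<Rightarrow>\<^sub>0 nat) \<Rightarrow> real poly" where
  "mon X m = (\<Prod>i\<in>Poly_Mapping.keys m. X i ^ Poly_Mapping.lookup m i)"

definition ev :: "(nat \<Rightarrow> real poly) \<Rightarrow> rpoly \<Rightarrow> real poly" where
  "ev X p = (\<Sum>m\<in>Poly_Mapping.keys p. smult (Poly_Mapping.lookup p m) (mon X m))"

lemma mon_super: "finite S \<Longrightarrow> Poly_Mapping.keys m \<subseteq> S \<Longrightarrow> mon X m = (\<Prod>i\<in>S. X i ^ Poly_Mapping.lookup m i)"
  unfolding mon_def
  by (rule prod.mono_neutral_left) (auto simp: in_keys_iff)

lemma ev_super: "finite S \<Longrightarrow> Poly_Mapping.keys p \<subseteq> S \<Longrightarrow> ev X p = (\<Sum>m\<in>S. smult (Poly_Mapping.lookup p m) (mon X m))"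
  unfolding ev_def
  by (rule sum.mono_neutral_left) (auto simp: in_keys_iff)

lemma mon_add: "mon X (a + b) = mon X a * mon X b"
proof -
  let ?S = "Poly_Mapping.keys a \<union> Poly_Mapping.keys b"
  have k: "Poly_Mapping.keys (a + b) \<subseteq> ?S" by (auto simp: in_keys_iff lookup_add)
  have "mon X (a + b) = (\<Prod>i\<in>?S. X i ^ Poly_Mapping.lookup (a+b) i)" by (rule mon_super[OF _ k]) simp
  also have "\<dots> = (\<Prod>i\<in>?S. X i ^ Poly_Mapping.lookup a i) * (\<Prod>i\<in>?S. X i ^ Poly_Mapping.lookup b i)"
    by (simp add: lookup_add power_add prod.distrib)
  also have "\<dots> = mon X a * mon X b"
    by (simp add: mon_super[symmetric])
  finally show ?thesis .
qed

lemma mon_zero [simp]: "mon X 0 = 1" by (simp add: mon_def)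

lemma ev_add: "ev X (p + q) = ev X p + ev X q"
proof -
  let ?S = "Poly_Mapping.keys p \<union> Poly_Mapping.keys q"
  have k: "Poly_Mapping.keys (p + q) \<subseteq> ?S" by (auto simp: in_keys_iff lookup_add)
  have "ev X (p + q) = (\<Sum>m\<in>?S. smult (Poly_Mapping.lookup (p+q) m) (mon X m))" by (rule ev_super[OF _ k]) simp
  also have "\<dots> = (\<Sum>m\<in>?S. smult (Poly_Mapping.lookup p m) (mon X m)) + (\<Sum>m\<in>?S. smult (Poly_Mapping.lookup q m) (mon X m))"
    by (simp add: lookup_add smult_add_left sum.distrib)
  also have "\<dots> = ev X p + ev X q"
    by (simp add: ev_super[symmetric])
  finally show ?thesis .
qed

lemma ev_zero [simp]: "ev X 0 = 0" by (simp add: ev_def)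

lemma ev_single: "ev X (Poly_Mapping.single m c) = smult c (mon X m)"
  by (simp add: ev_def)

lemma ev_sum: "ev X (sum f A) = (\<Sum>a\<in>A. ev X (f a))"
  by (induction A rule: infinite_finite_induct) (simp_all add: ev_add)

lemma pm_repr: "p = (\<Sum>m\<in>Poly_Mapping.keys p. Poly_Mapping.single m (Poly_Mapping.lookup p m))"
  by (rule poly_mapping_eqI) (simp add: lookup_sum lookup_single when_def in_keys_iff)

lemma ev_mult: "ev X (p * q) = ev X p * ev X q"
proof -
  have "p * q = (\<Sum>m\<in>Poly_Mapping.keys p. Poly_Mapping.single m (Poly_Mapping.lookup p m)) * (\<Sum>m\<in>Poly_Mapping.keys q. Poly_Mapping.single m (Poly_Mapping.lookup q m))"
    by (simp flip: pm_repr)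
  also have "\<dots> = (\<Sum>m1\<in>Poly_Mapping.keys p. \<Sum>m2\<in>Poly_Mapping.keys q. Poly_Mapping.single (m1+m2) (Poly_Mapping.lookup p m1 * Poly_Mapping.lookup q m2))"
    by (simp add: sum_product mult_single)
  finally have "ev X (p * q) = (\<Sum>m1\<in>Poly_Mapping.keys p. \<Sum>m2\<in>Poly_Mapping.keys q. smult (Poly_Mapping.lookup p m1) (mon X m1) * smult (Poly_Mapping.lookup q m2) (mon X m2))"
    by (simp add: ev_sum ev_single mon_add mult.commute mult.left_commute)
  also have "\<dots> = ev X p * ev X q"
    by (simp add: ev_def sum_product)
  finally show ?thesis .
qed

lemma ev_uminus: "ev X (- p) = - ev X p"
  using ev_add[of X p "-p"] by simp

lemma ev_diff: "ev X (p - q) = ev X p - ev X q"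
  using ev_add[of X "p - q" q] by simp

lemma ev_one [simp]: "ev X 1 = 1"
  using ev_single[of X 0 1] by (simp del: single_one add: single_one[symmetric])

lemma ev_prod: "ev X (prod f A) = (\<Prod>a\<in>A. ev X (f a))"
  by (induction A rule: infinite_finite_induct) (simp_all add: ev_mult)

lemma ev_tvar: "ev X (tvar i) = (if i = 0 then 0 else X i)"
  by (simp add: tvar_def ev_single mon_def)

lemma ev_pscale: "ev X (pscale c p) = smult c (ev X p)"
  by (simp add: pscale_def ev_mult ev_single)



definition Z :: "nat \<Rightarrow> real poly" where "Z k = (if k = 0 then 0 else monom 1 k)"

lemma Zdiff: assumes "p \<noteq> q" shows "Z q - Z p \<noteq> 0 \<and> degree (Z q - Z p) = max p q"
proof (cases "p = 0 \<or> q = 0")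
  case True
  then show ?thesis using assms by (auto simp: Z_def degree_monom_eq)
next
  case False
  show ?thesis
  proof (cases "p < q")
    case True
    have c: "coeff (Z q - Z p) q = 1" using False True by (simp add: Z_def coeff_monom)
    have "degree (Z q - Z p) \<le> q"
      using False True by (intro degree_diff_le) (auto simp: Z_def degree_monom_le intro: order.trans[OF degree_monom_le])
    moreover have "q \<le> degree (Z q - Z p)" using c by (intro le_degree) simp
    ultimately have "degree (Z q - Z p) = q" by simp
    moreover note c
    ultimately show ?thesis using True by auto
  next
    case F2: False
    then have "q < p" using assms by simp
    have c: "coeff (Z q - Z p) p = -1" using False \<open>q < p\<close> by (simp add: Z_def coeff_monom)
    have "degree (Z q - Z p) \<le> p"
      using False \<open>q < p\<close> by (intro degree_diff_le) (auto simp: Z_def intro: order.trans[OF degree_monom_le])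
    moreover have "p \<le> degree (Z q - Z p)" using c by (intro le_degree) simp
    ultimately have "degree (Z q - Z p) = p" by simp
    moreover note c
    ultimately show ?thesis using \<open>q < p\<close> by auto
  qed
qed

definition AP :: "nat \<Rightarrow> (nat \<times> nat) set" where "AP n = {(i, j). i < j \<and> j \<le> n}"
definition PR :: "nat \<Rightarrow> (nat \<times> nat) set" where "PR n = {(i, j). i < j \<and> j \<le> n \<and> j \<noteq> i + 1}"

lemma finite_AP [simp]: "finite (AP n)"
  by (rule finite_subset[of _ "{0..n} \<times> {0..n}"]) (auto simp: AP_def)
lemma finite_PR [simp]: "finite (PR n)"
  by (rule finite_subset[of _ "{0..n} \<times> {0..n}"]) (auto simp: PR_def)

lemma perm_le: fixes \<rho> :: "nat \<Rightarrow> nat" assumes "\<rho> permutes {1..n}" shows "x \<le> n \<longleftrightarrow> \<rho> x \<le> n"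
proof -
  have "x \<in> {1..n} \<longleftrightarrow> \<rho> x \<in> {1..n}" using permutes_in_image[OF assms] by simp
  moreover have "x \<notin> {1..n} \<Longrightarrow> \<rho> x = x" by (rule permutes_not_in[OF assms])
  ultimately show ?thesis
  proof (cases "x \<in> {1..n}")
    case True
    then have "\<rho> x \<in> {1..n}" using \<open>x \<in> {1..n} \<longleftrightarrow> \<rho> x \<in> {1..n}\<close> by blast
    then show ?thesis using True by simp
  next
    case False
    then have "\<rho> x = x" using \<open>x \<notin> {1..n} \<Longrightarrow> \<rho> x = x\<close> by blast
    then show ?thesis by simp
  qed
qed

lemma perm_le': fixes \<rho> :: "nat \<Rightarrow> nat" assumes "\<rho> permutes {1..n}" shows "\<rho> x \<le> n \<longleftrightarrow> x \<le> n"
  using perm_le[OF assms] by simp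

lemma perm_zero: fixes \<rho> :: "nat \<Rightarrow> nat" assumes "\<rho> permutes {1..n}" shows "\<rho> 0 = 0"
  by (rule permutes_not_in[OF assms]) simp

lemma mm: fixes f g :: "nat \<Rightarrow> nat" assumes "\<And>x. g (f x) = x"
  shows "(min (g (min (f x) (f y))) (g (max (f x) (f y))), max (g (min (f x) (f y))) (g (max (f x) (f y)))) = (min x y, max x y)"
  using assms by (cases "f x \<le> f y") (simp_all add: min_def max_def)

lemma A_inv: fixes \<rho> :: "nat \<Rightarrow> nat" assumes "\<rho> permutes {1..n}"
  shows "(\<Sum>(i, j)\<in>AP n. max (\<rho> i) (\<rho> j)) = (\<Sum>(i, j)\<in>AP n. j)"
proof -
  let ?h = "\<lambda>(i, j). (min (\<rho> i) (\<rho> j), max (\<rho> i) (\<rho> j))"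
  let ?h' = "\<lambda>(i, j). (min (inv \<rho> i) (inv \<rho> j), max (inv \<rho> i) (inv \<rho> j))"
  have inv: "\<And>x. inv \<rho> (\<rho> x) = x" "\<And>x. \<rho> (inv \<rho> x) = x"
    using permutes_inverses[OF assms] by auto
  have ip: "inv \<rho> permutes {1..n}" by (rule permutes_inv[OF assms])
  have injr: "\<And>x y. \<rho> x = \<rho> y \<longleftrightarrow> x = y" by (metis inv(1))
  have injr': "\<And>x y. inv \<rho> x = inv \<rho> y \<longleftrightarrow> x = y" by (metis inv(2))
  have b: "bij_betw ?h (AP n) (AP n)"
  proof (rule bij_betw_byWitness[where f' = ?h'])
    show "\<forall>a\<in>AP n. ?h' (?h a) = a"
    proof
      fix a assume "a \<in> AP n"
      then obtain i j where a: "a = (i, j)" "i < j" by (auto simp: AP_def)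
      show "?h' (?h a) = a" unfolding a using mm[of "inv \<rho>" \<rho>, OF inv(1), of i j] a(2) by simp
    qed
    show "\<forall>a\<in>AP n. ?h (?h' a) = a"
    proof
      fix a assume "a \<in> AP n"
      then obtain i j where a: "a = (i, j)" "i < j" by (auto simp: AP_def)
      show "?h (?h' a) = a" unfolding a using mm[of \<rho> "inv \<rho>", OF inv(2), of i j] a(2) by simp
    qed
    show "?h ` AP n \<subseteq> AP n"
    proof
      fix b assume "b \<in> ?h ` AP n"
      then obtain i j where b: "b = ?h (i, j)" "i < j" "j \<le> n" by (auto simp: AP_def)
      have "\<rho> i \<noteq> \<rho> j" using b(2) injr by simp
      moreover have "\<rho> i \<le> n" "\<rho> j \<le> n" using b(2,3) perm_le'[OF assms] by auto
      ultimately show "b \<in> AP n" unfolding b(1) AP_def by (simp add: min_def max_def)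
    qed
    show "?h' ` AP n \<subseteq> AP n"
    proof
      fix b assume "b \<in> ?h' ` AP n"
      then obtain i j where b: "b = ?h' (i, j)" "i < j" "j \<le> n" by (auto simp: AP_def)
      have "inv \<rho> i \<noteq> inv \<rho> j" using b(2) injr' by simp
      moreover have "inv \<rho> i \<le> n" "inv \<rho> j \<le> n" using b(2,3) perm_le'[OF ip] by auto
      ultimately show "b \<in> AP n" unfolding b(1) AP_def by (simp add: min_def max_def)
    qed
  qed
  have "(\<Sum>(i, j)\<in>AP n. max (\<rho> i) (\<rho> j)) = (\<Sum>x\<in>AP n. snd (?h x))"
    by (rule sum.cong) auto
  also have "\<dots> = (\<Sum>x\<in>AP n. snd x)"
    by (rule sum.reindex_bij_betw[OF b])
  finally show ?thesis by (simp add: case_prod_beta)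
qed

lemma AP_split: "AP n = PR n \<union> (\<lambda>k. (k - 1, k)) ` {1..n}" "PR n \<inter> (\<lambda>k. (k - 1, k)) ` {1..n} = {}"
  by (auto simp: AP_def PR_def image_def)

lemma F_split: "(\<Sum>(i, j)\<in>AP n. g i j) = (\<Sum>(i, j)\<in>PR n. g i j) + (\<Sum>k\<in>{1..n}. g (k - 1) k)"
proof -
  have inj: "inj_on (\<lambda>k. (k - 1, k)) {1..n}" by (auto simp: inj_on_def)
  have "(\<Sum>(i, j)\<in>AP n. g i j) = (\<Sum>(i, j)\<in>PR n. g i j) + (\<Sum>(i, j)\<in>(\<lambda>k. (k - 1, k)) ` {1..n}. g i j)"
    unfolding AP_split(1) using finite_PR[of n] by (intro sum.union_disjoint) (auto simp: PR_def)
  also have "(\<Sum>(i, j)\<in>(\<lambda>k. (k - 1, k)) ` {1..n}. g i j) = (\<Sum>k\<in>{1..n}. g (k - 1) k)"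
    by (subst sum.reindex[OF inj]) (simp add: comp_def)
  finally show ?thesis .
qed

lemma mono_perm_id: fixes \<rho> :: "nat \<Rightarrow> nat" assumes "\<rho> permutes {1..n}" and "\<forall>k\<in>{1..n}. \<rho> (k - 1) < \<rho> k"
  shows "\<rho> = id"
proof -
  have step: "\<rho> k + d \<le> \<rho> (k + d)" if "k + d \<le> n" for k d
    using that
  proof (induction d)
    case 0 then show ?case by simp
  next
    case (Suc d)
    then have "\<rho> (k + d) < \<rho> (k + Suc d)" using assms(2)[rule_format, of "k + Suc d"] by simp
    then show ?case using Suc by simp
  qed
  have ge: "k \<le> \<rho> k" for k
  proof (cases "k \<le> n")
    case True then show ?thesis using step[of 0 k] by simp
  next
    case False then show ?thesis using assms(1) by (simp add: permutes_not_in)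
  qed
  have "\<rho> k = k" for k
  proof (cases "k \<le> n")
    case True
    have "\<rho> k + (n - k) \<le> \<rho> n" using step[of k "n - k"] True by simp
    moreover have "\<rho> n \<le> n" using perm_le[OF assms(1), of n] by simp
    ultimately show ?thesis using ge[of k] True by simp
  next
    case False then show ?thesis using assms(1) by (simp add: permutes_not_in)
  qed
  then show ?thesis by auto
qed

lemma F_bound: fixes \<rho> :: "nat \<Rightarrow> nat" assumes "\<rho> permutes {1..n}"
  shows "(\<Sum>(i, j)\<in>PR n. max (\<rho> i) (\<rho> j)) \<le> (\<Sum>(i, j)\<in>PR n. j)"
    and "\<rho> \<noteq> id \<Longrightarrow> (\<Sum>(i, j)\<in>PR n. max (\<rho> i) (\<rho> j)) < (\<Sum>(i, j)\<in>PR n. j)"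
proof -
  have A: "(\<Sum>(i, j)\<in>PR n. max (\<rho> i) (\<rho> j)) + (\<Sum>k\<in>{1..n}. max (\<rho> (k - 1)) (\<rho> k))
     = (\<Sum>(i, j)\<in>PR n. j) + (\<Sum>k\<in>{1..n}. k)"
    using A_inv[OF assms] F_split[of "\<lambda>i j. max (\<rho> i) (\<rho> j)" n] F_split[of "\<lambda>i j. j" n] by simp
  have pk: "(\<Sum>k\<in>{1..n}. \<rho> k) = (\<Sum>k\<in>{1..n}. k)"
    using sum.reindex_bij_betw[OF permutes_imp_bij[OF assms], of id] by simp
  have le: "(\<Sum>k\<in>{1..n}. \<rho> k) \<le> (\<Sum>k\<in>{1..n}. max (\<rho> (k - 1)) (\<rho> k))"
    by (rule sum_mono) simp
  show "(\<Sum>(i, j)\<in>PR n. max (\<rho> i) (\<rho> j)) \<le> (\<Sum>(i, j)\<in>PR n. j)"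
    using A pk le by linarith
  assume "\<rho> \<noteq> id"
  then obtain k where k: "k \<in> {1..n}" "\<not> \<rho> (k - 1) < \<rho> k" using mono_perm_id[OF assms] by blast
  have "k - 1 \<noteq> k" using k(1) by (cases k) auto
  then have "\<rho> (k - 1) \<noteq> \<rho> k" by (metis permutes_inj[OF assms] injD)
  then have "\<rho> k < max (\<rho> (k - 1)) (\<rho> k)" using k(2) by simp
  then have "(\<Sum>k\<in>{1..n}. \<rho> k) < (\<Sum>k\<in>{1..n}. max (\<rho> (k - 1)) (\<rho> k))"
    using k(1) by (intro sum_strict_mono_ex1) auto
  then show "(\<Sum>(i, j)\<in>PR n. max (\<rho> i) (\<rho> j)) < (\<Sum>(i, j)\<in>PR n. j)"
    using A pk by linarith
qed



lemma perm_facts: fixes s :: "nat \<Rightarrow> nat" assumes "s permutes {1..n}"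
  shows "inj s" "s 0 = 0" "\<And>x. inv s (s x) = x" "\<And>x. s (inv s x) = x" "inv s permutes {1..n}"
  using assms permutes_inj[OF assms] perm_zero[OF assms] permutes_inverses[OF assms] permutes_inv[OF assms]
  by auto

lemma ev_Ps:
  fixes \<sigma> s :: "nat \<Rightarrow> nat"
  assumes \<sigma>: "\<sigma> permutes {1..n}" and s: "s permutes {1..n}"
  shows "ev (\<lambda>v. monom 1 (inv \<sigma> v)) (Ps n s) \<noteq> 0 \<and>
    degree (ev (\<lambda>v. monom 1 (inv \<sigma> v)) (Ps n s)) = (\<Sum>(i,j)\<in>PR n. max ((inv \<sigma> \<circ> s) i) ((inv \<sigma> \<circ> s) j))"
proof -
  define X where "X = (\<lambda>v. monom (1::real) (inv \<sigma> v))"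
  let ?r = "inv \<sigma> \<circ> s"
  have rp: "?r permutes {1..n}" by (rule permutes_compose[OF s permutes_inv[OF \<sigma>]])
  have injr: "inj ?r" by (rule permutes_inj[OF rp])
  have tv: "ev X (tvar v) = Z (inv \<sigma> v)" for v
  proof (cases "v = 0")
    case True then show ?thesis using perm_facts(2)[OF perm_facts(5)[OF \<sigma>]] by (simp add: ev_tvar Z_def)
  next
    case False
    have "inv \<sigma> v \<noteq> 0"
      using False perm_facts(2)[OF \<sigma>] perm_facts(4)[OF \<sigma>] by metis
    then show ?thesis using False by (simp add: ev_tvar Z_def X_def)
  qed
  have e: "ev X (Ps n s) = (\<Prod>x\<in>PR n. Z (?r (snd x)) - Z (?r (fst x)))"
    unfolding Ps_def PR_def[symmetric] ev_prod
    by (rule prod.cong) (auto simp: ev_diff tv)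
  have f: "Z (?r (snd x)) - Z (?r (fst x)) \<noteq> 0 \<and> degree (Z (?r (snd x)) - Z (?r (fst x))) = max (?r (fst x)) (?r (snd x))"
    if "x \<in> PR n" for x
  proof -
    have "fst x \<noteq> snd x" using that by (auto simp: PR_def)
    then have "?r (fst x) \<noteq> ?r (snd x)" using injr by (metis injD)
    then show ?thesis by (rule Zdiff)
  qed
  have "ev X (Ps n s) \<noteq> 0" unfolding e using f by (simp add: prod_zero_iff)
  moreover have "degree (ev X (Ps n s)) = (\<Sum>x\<in>PR n. max (?r (fst x)) (?r (snd x)))"
    unfolding e using f by (simp add: degree_prod_eq_sum_degree)
  ultimately show ?thesis unfolding X_def by (simp add: case_prod_beta)
qed

lemma deg_self:
  fixes \<sigma> :: "nat \<Rightarrow> nat"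
  assumes \<sigma>: "\<sigma> permutes {1..n}"
  shows "degree (ev (\<lambda>v. monom 1 (inv \<sigma> v)) (Ps n \<sigma>)) = (\<Sum>(i,j)\<in>PR n. j)"
proof -
  have "inv \<sigma> \<circ> \<sigma> = id" using permutes_inv_o(2)[OF \<sigma>] .
  then have "(\<Sum>(i,j)\<in>PR n. max ((inv \<sigma> \<circ> \<sigma>) i) ((inv \<sigma> \<circ> \<sigma>) j)) = (\<Sum>(i,j)\<in>PR n. j)"
    by (intro sum.cong) (auto simp: PR_def)
  then show ?thesis using ev_Ps[OF \<sigma> \<sigma>] by simp
qed

lemma deg_other:
  fixes \<sigma> s :: "nat \<Rightarrow> nat"
  assumes \<sigma>: "\<sigma> permutes {1..n}" and s: "s permutes {1..n}" and ne: "s \<noteq> \<sigma>"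
  shows "degree (ev (\<lambda>v. monom 1 (inv \<sigma> v)) (Ps n s)) < (\<Sum>(i,j)\<in>PR n. j)"
proof -
  have rp: "inv \<sigma> \<circ> s permutes {1..n}" by (rule permutes_compose[OF s permutes_inv[OF \<sigma>]])
  have "inv \<sigma> \<circ> s \<noteq> id"
  proof
    assume "inv \<sigma> \<circ> s = id"
    then have "\<sigma> \<circ> (inv \<sigma> \<circ> s) = \<sigma>" by simp
    then have "s = \<sigma>" using permutes_inv_o(1)[OF \<sigma>] by (simp add: o_assoc)
    then show False using ne by simp
  qed
  then show ?thesis using ev_Ps[OF \<sigma> s] F_bound(2)[OF rp] by simp
qed

lemma Ps_inj: "inj_on (Ps n) {s. s permutes {1..n}}"
proof (rule inj_onI)
  fix s \<sigma> assume s: "s \<in> {s. s permutes {1..n}}" and \<sigma>: "\<sigma> \<in> {s. s permutes {1..n}}" and eq: "Ps n s = Ps n \<sigma>"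
  show "s = \<sigma>"
  proof (rule ccontr)
    assume "s \<noteq> \<sigma>"
    then show False using deg_other[of \<sigma> n s] deg_self[of \<sigma> n] s \<sigma> eq by simp
  qed
qed

lemma Ps_indep: "\<not> pdependent (Ps n ` {s. s permutes {1..n}})"
proof
  assume "pdependent (Ps n ` {s. s permutes {1..n}})"
  then obtain t u v0 where t: "finite t" "t \<subseteq> Ps n ` {s. s permutes {1..n}}"
    "(\<Sum>v\<in>t. pscale (u v) v) = 0" and v0: "v0 \<in> t" "u v0 \<noteq> 0"
    unfolding pm.dependent_explicit by blast
  obtain \<sigma> where \<sigma>: "\<sigma> permutes {1..n}" and v0e: "v0 = Ps n \<sigma>" using t(2) v0(1) by blast
  define X where "X = (\<lambda>v. monom (1::real) (inv \<sigma> v))"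
  define D where "D = (\<Sum>(i,j)\<in>PR n. j)"
  have "ev X (\<Sum>v\<in>t. pscale (u v) v) = 0" using t(3) by simp
  then have "(\<Sum>v\<in>t. smult (u v) (ev X v)) = 0" by (simp add: ev_sum ev_pscale)
  then have "coeff (\<Sum>v\<in>t. smult (u v) (ev X v)) D = 0" by simp
  then have s0: "(\<Sum>v\<in>t. u v * coeff (ev X v) D) = 0" by (simp add: coeff_sum)
  have oth: "u v * coeff (ev X v) D = 0" if vt: "v \<in> t - {v0}" for v
  proof -
    obtain s where s: "s permutes {1..n}" and ve: "v = Ps n s" using vt t(2) by blast
    have "s \<noteq> \<sigma>" using vt ve v0e by auto
    then have "degree (ev X v) < D" using deg_other[OF \<sigma> s] ve by (simp add: X_def D_def)
    then show ?thesis by (simp add: coeff_eq_0)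
  qed
  have "(\<Sum>v\<in>t. u v * coeff (ev X v) D) = u v0 * coeff (ev X v0) D + (\<Sum>v\<in>t - {v0}. u v * coeff (ev X v) D)"
    by (rule sum.remove[OF t(1) v0(1)])
  also have "(\<Sum>v\<in>t - {v0}. u v * coeff (ev X v) D) = 0" using oth by (intro sum.neutral) blast
  finally have "u v0 * coeff (ev X v0) D = 0" using s0 by simp
  moreover have "coeff (ev X v0) D \<noteq> 0"
  proof -
    have "degree (ev X v0) = D" using deg_self[OF \<sigma>] v0e by (simp add: X_def D_def)
    moreover have "ev X v0 \<noteq> 0" using ev_Ps[OF \<sigma> \<sigma>] v0e by (simp add: X_def)
    ultimately show ?thesis by (metis leading_coeff_0_iff)
  qed
  ultimately show False using v0(2) by simp
qed



lemma connects_refl [simp]: "connects T u u"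
  by (simp add: connects_def)

lemma connects_sym: "connects T u v \<Longrightarrow> connects T v u"
proof -
  assume "connects T u v"
  then have "(v, u) \<in> ((T \<union> T\<inverse>)\<inverse>)\<^sup>*" unfolding connects_def by (rule rtrancl_converseI)
  moreover have "(T \<union> T\<inverse>)\<inverse> = T \<union> T\<inverse>" by auto
  ultimately show ?thesis unfolding connects_def by simp
qed

lemma connects_trans: "connects T u v \<Longrightarrow> connects T v w \<Longrightarrow> connects T u w"
  unfolding connects_def by (rule rtrancl_trans)

lemma connects_edge: "(u, v) \<in> T \<Longrightarrow> connects T u v" "(u, v) \<in> T \<Longrightarrow> connects T v u"
  unfolding connects_def by auto

lemma connects_mono: "S \<subseteq> T \<Longrightarrow> connects S u v \<Longrightarrow> connects T u v"
  unfolding connects_def by (rule rtrancl_mono[THEN subsetD]) auto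

lemma connects_subst:
  assumes "\<And>u v. (u, v) \<in> S \<Longrightarrow> connects T u v" and "connects S x y"
  shows "connects T x y"
proof -
  have "(x, y) \<in> (S \<union> S\<inverse>)\<^sup>*" using assms(2) by (simp add: connects_def)
  then show ?thesis
  proof (induction rule: rtrancl_induct)
    case base then show ?case by simp
  next
    case (step y z)
    then have "connects T y z" using assms(1) connects_sym by blast
    then show ?case using step.IH connects_trans by blast
  qed
qed

lemma connects_insert:
  assumes "connects (insert (a, b) S) x y"
  shows "connects S x y \<or> (connects S x a \<and> connects S b y) \<or> (connects S x b \<and> connects S a y)"
proof -
  have "(x, y) \<in> (insert (a, b) S \<union> (insert (a, b) S)\<inverse>)\<^sup>*" using assms by (simp add: connects_def)
  then show ?thesis
  proof (induction rule: rtrancl_induct)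
    case base then show ?case by simp
  next
    case (step y z)
    show ?case
    proof (cases "(y, z) \<in> S \<union> S\<inverse>")
      case True
      then have yz: "connects S y z" unfolding connects_def by auto
      show ?thesis using step.IH yz connects_trans connects_sym by blast
    next
      case False
      then have "(y = a \<and> z = b) \<or> (y = b \<and> z = a)" using step.hyps(2) by auto
      then show ?thesis using step.IH connects_trans connects_sym connects_refl by blast
    qed
  qed
qed

lemma connects_touch:
  assumes "connects T u v" "u \<noteq> v"
  shows "\<exists>e\<in>T. fst e = v \<or> snd e = v"
proof -
  have "(u, v) \<in> (T \<union> T\<inverse>)\<^sup>*" using assms by (simp add: connects_def)
  then show ?thesis using assms(2)
  proof (induction rule: rtrancl_induct)
    case base then show ?case by simp
  next
    case (step y z)
    then show ?case by force
  qed
qed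

lemma prod_pm:
  fixes f g :: "'a \<Rightarrow> 'b::comm_ring_1"
  assumes "finite A" "\<forall>a\<in>A. f a = g a \<or> f a = - g a"
  shows "prod f A = prod g A \<or> prod f A = - prod g A"
  using assms
proof (induction A rule: finite_induct)
  case empty then show ?case by simp
next
  case (insert x F)
  then have "prod f F = prod g F \<or> prod f F = - prod g F" "f x = g x \<or> f x = - g x" by auto
  then show ?case using insert.hyps by auto
qed

lemma prod_pm_bij:
  fixes f :: "'a \<Rightarrow> 'c::comm_ring_1"
  assumes "finite A" "bij_betw h A B" "\<forall>a\<in>A. f a = g (h a) \<or> f a = - g (h a)"
  shows "prod f A = prod g B \<or> prod f A = - prod g B"
proof -
  have "prod g B = prod (\<lambda>a. g (h a)) A" by (rule sym[OF prod.reindex_bij_betw[OF assms(2)]])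
  then show ?thesis using prod_pm[OF assms(1), of f "\<lambda>a. g (h a)"] assms(3) by simp
qed

section \<open>Path trees\<close>

definition Tp :: "nat \<Rightarrow> (nat \<Rightarrow> nat) \<Rightarrow> (nat \<times> nat) set" where
  "Tp n s = (\<lambda>k. (min (s (k - 1)) (s k), max (s (k - 1)) (s k))) ` {1..n}"

lemma Tp_tree:
  fixes s :: "nat \<Rightarrow> nat"
  assumes s: "s permutes {1..n}"
  shows "spanning_tree n (Tp n s)"
proof -
  note pf = perm_facts[OF s]
  let ?e = "\<lambda>k. (min (s (k - 1)) (s k), max (s (k - 1)) (s k))"
  have ne: "s (k - 1) \<noteq> s k" if "k \<in> {1..n}" for k
  proof -
    have "k - 1 \<noteq> k" using that by (cases k) auto
    then show ?thesis using pf(1) by (auto dest: injD)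
  qed
  have sub: "Tp n s \<subseteq> cedges n"
  proof
    fix e assume "e \<in> Tp n s"
    then obtain k where k: "k \<in> {1..n}" "e = ?e k" by (auto simp: Tp_def)
    have "s (k - 1) \<le> n" "s k \<le> n" using k(1) by (auto simp add: perm_le'[OF s])
    then show "e \<in> cedges n" using ne[OF k(1)] k(2) by (auto simp: cedges_def min_def max_def)
  qed
  have c0: "connects (Tp n s) 0 (s k)" if "k \<le> n" for k
    using that
  proof (induction k)
    case 0 then show ?case using pf(2) by simp
  next
    case (Suc k)
    have "?e (Suc k) \<in> Tp n s" unfolding Tp_def using Suc.prems by (intro image_eqI[of _ _ "Suc k"]) auto
    then have "connects (Tp n s) (s k) (s (Suc k))"
      by (cases "s k \<le> s (Suc k)") (auto simp: min_def max_def intro: connects_edge)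
    then show ?case using Suc connects_trans by auto
  qed
  have conn: "connects (Tp n s) u v" if "u \<in> {0..n}" "v \<in> {0..n}" for u v
  proof -
    have "inv s u \<le> n" "inv s v \<le> n" using that by (auto simp add: perm_le'[OF pf(5)])
    then have "connects (Tp n s) 0 u" "connects (Tp n s) 0 v" using c0 pf(4) by metis+
    then show ?thesis using connects_sym connects_trans by blast
  qed
  have acyc: "\<not> connects (Tp n s - {(i, j)}) i j" if ij: "(i, j) \<in> Tp n s" for i j
  proof
    assume c: "connects (Tp n s - {(i, j)}) i j"
    obtain k where k: "k \<in> {1..n}" "(i, j) = ?e k" using ij by (auto simp: Tp_def)
    have inv_inv: "\<And>x y. connects (Tp n s - {(i, j)}) x y \<Longrightarrow> (inv s x < k \<longleftrightarrow> inv s y < k)"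
    proof -
      fix x y assume "connects (Tp n s - {(i, j)}) x y"
      then have "(x, y) \<in> ((Tp n s - {(i, j)}) \<union> (Tp n s - {(i, j)})\<inverse>)\<^sup>*" by (simp add: connects_def)
      then show "inv s x < k \<longleftrightarrow> inv s y < k"
      proof (induction rule: rtrancl_induct)
        case base then show ?case by simp
      next
        case (step y z)
        obtain k' where k': "k' \<in> {1..n}" "(y, z) = ?e k' \<or> (z, y) = ?e k'" "?e k' \<noteq> (i, j)"
          using step.hyps(2) by (auto simp: Tp_def)
        have "k' \<noteq> k" using k'(3) k(2) by auto
        have "{y, z} = {s (k' - 1), s k'}" using k'(2) by (auto simp: min_def max_def split: if_splits)
        then have "inv s ` {y, z} = inv s ` {s (k' - 1), s k'}" by simp
        then have "{inv s y, inv s z} = {k' - 1, k'}" using pf(3) by simp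
        then have "(inv s y < k \<longleftrightarrow> inv s z < k)" using \<open>k' \<noteq> k\<close> k'(1) by (auto simp: doubleton_eq_iff)
        then show ?case using step.IH by simp
      qed
    qed
    have "{i, j} = {s (k - 1), s k}" using k(2) by (auto simp: min_def max_def split: if_splits)
    then have "inv s ` {i, j} = inv s ` {s (k - 1), s k}" by simp
    then have "{inv s i, inv s j} = {k - 1, k}" using pf(3) by simp
    moreover have "inv s i < k \<longleftrightarrow> inv s j < k" using inv_inv[OF c] .
    ultimately show False using k(1) by (auto simp: doubleton_eq_iff)
  qed
  show ?thesis unfolding spanning_tree_def using sub conn acyc by blast
qed



lemma finite_cedges [simp]: "finite (cedges n)"
  by (rule finite_subset[of _ "{0..n} \<times> {0..n}"]) (auto simp: cedges_def)

lemma minmax_eq: "((min a b, max a b) = (min c d, max c d)) \<longleftrightarrow> {a, b} = {c, (d::nat)}"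
  by (cases "a \<le> b"; cases "c \<le> d") (auto simp: min_def max_def doubleton_eq_iff)

lemma Ps_alt: "Ps n s = (\<Prod>x\<in>PR n. tvar (s (snd x)) - tvar (s (fst x)))"
  unfolding Ps_def PR_def by (simp add: case_prod_beta)

lemma pY_alt: "pY Y = (\<Prod>x\<in>Y. tvar (snd x) - tvar (fst x))"
  unfolding pY_def by (simp add: case_prod_beta)

lemma Ps_pm:
  fixes s :: "nat \<Rightarrow> nat" assumes s: "s permutes {1..n}"
  shows "Ps n s = pY (cedges n - Tp n s) \<or> Ps n s = - pY (cedges n - Tp n s)"
proof -
  note pf = perm_facts[OF s]
  let ?h = "\<lambda>x. (min (s (fst x)) (s (snd x)), max (s (fst x)) (s (snd x)))"
  let ?h' = "\<lambda>x. (min (inv s (fst x)) (inv s (snd x)), max (inv s (fst x)) (inv s (snd x)))"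
  have injs: "\<And>x y. s x = s y \<longleftrightarrow> x = y" using pf(3) by metis
  have injs': "\<And>x y. inv s x = inv s y \<longleftrightarrow> x = y" using pf(4) by metis
  have key: "?h (i, j) \<in> Tp n s \<longleftrightarrow> j = i + 1" if ij: "i < j" "j \<le> n" for i j
  proof
    assume "?h (i, j) \<in> Tp n s"
    then obtain k where k: "k \<in> {1..n}" "?h (i, j) = (min (s (k - 1)) (s k), max (s (k - 1)) (s k))"
      by (auto simp: Tp_def)
    then have "{s i, s j} = {s (k - 1), s k}" using minmax_eq by simp
    then have "(i = k - 1 \<and> j = k) \<or> (i = k \<and> j = k - 1)" by (simp add: doubleton_eq_iff injs)
    then show "j = i + 1" using ij k(1) by auto
  next
    assume j: "j = i + 1"
    show "?h (i, j) \<in> Tp n s" unfolding Tp_def using ij j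
      by (intro image_eqI[of _ _ j]) auto
  qed
  have b: "bij_betw ?h (PR n) (cedges n - Tp n s)"
  proof (rule bij_betw_byWitness[where f' = ?h'])
    show "\<forall>a\<in>PR n. ?h' (?h a) = a"
    proof
      fix a assume "a \<in> PR n"
      then obtain i j where a: "a = (i, j)" "i < j" by (auto simp: PR_def)
      show "?h' (?h a) = a" unfolding a using mm[of "inv s" s, OF pf(3), of i j] a(2) by simp
    qed
    show "\<forall>a\<in>cedges n - Tp n s. ?h (?h' a) = a"
    proof
      fix a assume "a \<in> cedges n - Tp n s"
      then obtain i j where a: "a = (i, j)" "i < j" by (auto simp: cedges_def)
      show "?h (?h' a) = a" unfolding a using mm[of s "inv s", OF pf(4), of i j] a(2) by simp
    qed
    show "?h ` PR n \<subseteq> cedges n - Tp n s"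
    proof
      fix b assume "b \<in> ?h ` PR n"
      then obtain i j where b: "b = ?h (i, j)" "i < j" "j \<le> n" "j \<noteq> i + 1" by (auto simp: PR_def)
      have "s i \<noteq> s j" using b(2) injs by simp
      moreover have "s i \<le> n" "s j \<le> n" using b(2,3) by (auto simp: perm_le'[OF s])
      ultimately have "b \<in> cedges n" unfolding b(1) cedges_def by (simp add: min_def max_def)
      moreover have "b \<notin> Tp n s" using key[OF b(2,3)] b(1,4) by simp
      ultimately show "b \<in> cedges n - Tp n s" by simp
    qed
    show "?h' ` (cedges n - Tp n s) \<subseteq> PR n"
    proof
      fix b assume "b \<in> ?h' ` (cedges n - Tp n s)"
      then obtain x y where b: "b = ?h' (x, y)" "x < y" "y \<le> n" "(x, y) \<notin> Tp n s"
        by (auto simp: cedges_def)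
      define i where "i = min (inv s x) (inv s y)"
      define j where "j = max (inv s x) (inv s y)"
      have "inv s x \<noteq> inv s y" using b(2) injs' by simp
      moreover have "inv s x \<le> n" "inv s y \<le> n" using b(2,3) by (auto simp: perm_le'[OF pf(5)])
      ultimately have ij: "i < j" "j \<le> n" unfolding i_def j_def by (auto simp: min_def max_def)
      have hb: "?h (i, j) = (x, y)" unfolding i_def j_def using mm[of s "inv s", OF pf(4), of x y] b(2) by simp
      have "j \<noteq> i + 1" using key[OF ij] hb b(4) by auto
      then show "b \<in> PR n" using ij b(1) unfolding PR_def i_def j_def by simp
    qed
  qed
  have sg: "\<forall>a\<in>PR n. tvar (s (snd a)) - tvar (s (fst a)) = (\<lambda>x. tvar (snd x) - tvar (fst x)) (?h a)
     \<or> tvar (s (snd a)) - tvar (s (fst a)) = - (\<lambda>x. tvar (snd x) - tvar (fst x)) (?h a)"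
  proof
    fix a assume "a \<in> PR n"
    show "tvar (s (snd a)) - tvar (s (fst a)) = (\<lambda>x. tvar (snd x) - tvar (fst x)) (?h a)
     \<or> tvar (s (snd a)) - tvar (s (fst a)) = - (\<lambda>x. tvar (snd x) - tvar (fst x)) (?h a)"
      by (cases "s (fst a) \<le> s (snd a)") (auto simp: min_def max_def)
  qed
  show ?thesis unfolding Ps_alt pY_alt using prod_pm_bij[OF finite_PR b sg] by simp
qed

lemma Ps_in_span: "s permutes {1..n} \<Longrightarrow> Ps n s \<in> pspan {pY (cedges n - T) | T. spanning_tree n T}"
proof -
  assume s: "s permutes {1..n}"
  have m: "pY (cedges n - Tp n s) \<in> {pY (cedges n - T) | T. spanning_tree n T}"
    using Tp_tree[OF s] by blast
  have sp: "pY (cedges n - Tp n s) \<in> pspan {pY (cedges n - T) | T. spanning_tree n T}"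
    using m by (rule pm.span_base)
  then show ?thesis
  proof (cases "Ps n s = pY (cedges n - Tp n s)")
    case True
    then show ?thesis using sp by simp
  next
    case False
    then have "Ps n s = - pY (cedges n - Tp n s)" using Ps_pm[OF s] by simp
    then show ?thesis using sp pm.span_neg by simp
  qed
qed

lemma span_mult:
  assumes "x \<in> pspan S" "\<And>y. y \<in> S \<Longrightarrow> y * q \<in> pspan S'"
  shows "x * q \<in> pspan S'"
proof -
  have "pspan S \<subseteq> {x. x * q \<in> pspan S'}"
  proof (rule pm.span_minimal)
    show "S \<subseteq> {x. x * q \<in> pspan S'}" using assms(2) by blast
    show "pm.subspace {x. x * q \<in> pspan S'}"
      unfolding pm.subspace_def
    proof (intro conjI ballI allI)
      show "0 \<in> {x. x * q \<in> pspan S'}" by (simp add: pm.span_zero)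
      fix x y assume "x \<in> {x. x * q \<in> pspan S'}" "y \<in> {x. x * q \<in> pspan S'}"
      then show "x + y \<in> {x. x * q \<in> pspan S'}" by (simp add: distrib_right pm.span_add)
    next
      fix c x assume "x \<in> {x. x * q \<in> pspan S'}"
      then have "x * q \<in> pspan S'" by simp
      then have "pscale c (x * q) \<in> pspan S'" by (rule pm.span_scale)
      then show "pscale c x \<in> {x. x * q \<in> pspan S'}" by (simp add: pscale_def mult.assoc)
    qed
  qed
  then show ?thesis using assms(1) by blast
qed



lemma perm_img: fixes s :: "nat \<Rightarrow> nat" assumes "s permutes {1..m}" shows "s ` {0..m} = {0..m}"
proof -
  have "{0..m} = insert 0 {1..m}" by auto
  then show ?thesis using permutes_image[OF assms] perm_zero[OF assms] by simp
qed

definition Qv :: "nat \<Rightarrow> nat \<Rightarrow> rpoly" where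
  "Qv m a = (\<Prod>v\<in>{0..m} - {a}. tvar (Suc m) - tvar v)"

lemma ins_end:
  fixes s :: "nat \<Rightarrow> nat"
  assumes s: "s permutes {1..m}"
  shows "Ps (Suc m) s = Ps m s * Qv m (s m)"
proof -
  note pf = perm_facts[OF s]
  have sN: "s (Suc m) = Suc m" by (rule permutes_not_in[OF s]) simp
  let ?F = "\<lambda>x. tvar (s (snd x)) - tvar (s (fst x))"
  have PRs: "PR (Suc m) = PR m \<union> (\<lambda>i. (i, Suc m)) ` {0..<m}"
  proof (rule set_eqI, rule iffI)
    fix x assume "x \<in> PR (Suc m)"
    then obtain i j where ij: "x = (i, j)" "i < j" "j \<le> Suc m" "j \<noteq> i + 1" by (auto simp: PR_def)
    show "x \<in> PR m \<union> (\<lambda>i. (i, Suc m)) ` {0..<m}"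
    proof (cases "j = Suc m")
      case True
      then have "i < m" using ij by auto
      then show ?thesis using ij True by auto
    next
      case False
      then show ?thesis using ij by (auto simp: PR_def)
    qed
  next
    fix x assume "x \<in> PR m \<union> (\<lambda>i. (i, Suc m)) ` {0..<m}"
    then show "x \<in> PR (Suc m)" by (auto simp: PR_def)
  qed
  have disj: "PR m \<inter> (\<lambda>i. (i, Suc m)) ` {0..<m} = {}" by (auto simp: PR_def)
  have inj: "inj_on (\<lambda>i. (i, Suc m)) {0..<m}" by (auto simp: inj_on_def)
  have "Ps (Suc m) s = (\<Prod>x\<in>PR m. ?F x) * (\<Prod>x\<in>(\<lambda>i. (i, Suc m)) ` {0..<m}. ?F x)"
    unfolding Ps_alt PRs by (rule prod.union_disjoint) (auto simp: disj)
  also have "(\<Prod>x\<in>(\<lambda>i. (i, Suc m)) ` {0..<m}. ?F x) = (\<Prod>i\<in>{0..<m}. tvar (Suc m) - tvar (s i))"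
    by (simp add: prod.reindex[OF inj] sN)
  also have "\<dots> = Qv m (s m)"
  proof -
    have "s ` {0..<m} = {0..m} - {s m}"
    proof -
      have "{0..<m} = {0..m} - {m}" by auto
      then show ?thesis using image_set_diff[OF pf(1), of "{0..m}" "{m}"] perm_img[OF s] by simp
    qed
    then show ?thesis unfolding Qv_def
      using prod.reindex[OF inj_on_subset[OF pf(1) subset_UNIV], of "\<lambda>v. tvar (Suc m) - tvar v" "{0..<m}"]
      by simp
  qed
  finally show ?thesis by (simp add: Ps_alt)
qed

definition insp :: "nat \<Rightarrow> nat \<Rightarrow> (nat \<Rightarrow> nat) \<Rightarrow> nat \<Rightarrow> nat" where
  "insp m k s i = (if i \<le> k then s i else if i = Suc k then Suc m else if i \<le> Suc m then s (i - 1) else i)"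

lemma insp_perm:
  fixes s :: "nat \<Rightarrow> nat"
  assumes s: "s permutes {1..m}" and k: "k < m"
  shows "insp m k s permutes {1..Suc m}"
proof (rule bij_imp_permutes)
  let ?p = "insp m k s"
  let ?q = "\<lambda>v. if v = Suc m then Suc k else if v \<le> m then (if inv s v \<le> k then inv s v else Suc (inv s v)) else v"
  note pf = perm_facts[OF s]
  have le1: "\<And>x. s x \<le> m \<longleftrightarrow> x \<le> m" by (rule perm_le'[OF s])
  have le2: "\<And>x. inv s x \<le> m \<longleftrightarrow> x \<le> m" by (rule perm_le'[OF pf(5)])
  have nz1: "\<And>x. s x = 0 \<longleftrightarrow> x = 0" using pf(2) pf(3) by metis
  have nz2: "\<And>x. inv s x = 0 \<longleftrightarrow> x = 0" using pf(2) pf(3) pf(4) by metis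
  show "bij_betw ?p {1..Suc m} {1..Suc m}"
  proof (rule bij_betw_byWitness[where f'="?q"])
    show "\<forall>x\<in>{1..Suc m}. ?q (?p x) = x"
    proof
      fix x assume x: "x \<in> {1..Suc m}"
      consider "x \<le> k" | "x = Suc k" | "Suc k < x" by linarith
      then show "?q (?p x) = x"
      proof cases
        case 1
        then have "s x \<le> m" "s x \<noteq> Suc m" using le1[of x] k by auto
        then show ?thesis using 1 by (simp add: insp_def pf(3))
      next
        case 2 then show ?thesis by (simp add: insp_def)
      next
        case 3
        then have "x - 1 \<le> m" "s (x - 1) \<le> m" using x le1[of "x - 1"] by auto
        then show ?thesis using 3 x by (simp add: insp_def pf(3))
      qed
    qed
    show "\<forall>v\<in>{1..Suc m}. ?p (?q v) = v"
    proof
      fix v assume v: "v \<in> {1..Suc m}"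
      show "?p (?q v) = v"
      proof (cases "v = Suc m")
        case True then show ?thesis by (simp add: insp_def)
      next
        case False
        then have vm: "v \<le> m" using v by auto
        then have "inv s v \<le> m" using le2 by simp
        then show ?thesis using False vm by (auto simp: insp_def pf(4))
      qed
    qed
    show "?p ` {1..Suc m} \<subseteq> {1..Suc m}"
    proof
      fix y assume "y \<in> ?p ` {1..Suc m}"
      then obtain x where x: "x \<in> {1..Suc m}" "y = ?p x" by blast
      consider "x \<le> k" | "x = Suc k" | "Suc k < x" by linarith
      then show "y \<in> {1..Suc m}"
      proof cases
        case 1
        then have "s x \<le> m" "s x \<noteq> 0" using le1[of x] nz1[of x] k x by auto
        then show ?thesis using 1 x by (simp add: insp_def)
      next
        case 2 then show ?thesis using x by (simp add: insp_def)
      next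
        case 3
        then have "s (x - 1) \<le> m" "s (x - 1) \<noteq> 0" using x le1[of "x - 1"] nz1[of "x - 1"] by auto
        then show ?thesis using 3 x by (simp add: insp_def)
      qed
    qed
    show "?q ` {1..Suc m} \<subseteq> {1..Suc m}"
    proof
      fix y assume "y \<in> ?q ` {1..Suc m}"
      then obtain v where v: "v \<in> {1..Suc m}" "y = ?q v" by blast
      show "y \<in> {1..Suc m}"
      proof (cases "v = Suc m")
        case True then show ?thesis using v k by simp
      next
        case False
        then have vm: "v \<le> m" "v \<noteq> 0" using v by auto
        then have "inv s v \<le> m" "inv s v \<noteq> 0" using le2 nz2 by auto
        then show ?thesis using False vm v by auto
      qed
    qed
  qed
  show "\<And>x. x \<notin> {1..Suc m} \<Longrightarrow> ?p x = x"
  proof -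
    fix x assume "x \<notin> {1..Suc m}"
    then have "x = 0 \<or> Suc m < x" by auto
    moreover have "\<And>y. m < y \<Longrightarrow> s y = y" using permutes_not_in[OF s] by simp
    ultimately show "?p x = x" using pf(2) k by (auto simp: insp_def)
  qed
qed



lemma ins_mid:
  fixes s :: "nat \<Rightarrow> nat"
  assumes s: "s permutes {1..m}" and k: "Suc k \<le> m"
  shows "Ps (Suc m) (insp m k s) = (-1) ^ (m - Suc k) *
    (Ps m s * ((tvar (s (Suc k)) - tvar (s k)) * (\<Prod>v\<in>{0..m} - {s k, s (Suc k)}. tvar (Suc m) - tvar v)))"
proof -
  note pf = perm_facts[OF s]
  let ?p = "insp m k s"
  define ins where "ins i = (if i \<le> k then i else Suc i)" for i
  define S0 where "S0 = (\<lambda>x. (ins (fst x), ins (snd x))) ` insert (k, Suc k) (PR m)"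
  define S1 where "S1 = (\<lambda>i. (i, Suc k)) ` {0..<k}"
  define S2 where "S2 = (\<lambda>j. (Suc k, Suc j)) ` {Suc (Suc k)..m}"
  let ?F = "\<lambda>x. tvar (?p (snd x)) - tvar (?p (fst x))"
  have pins: "?p (ins i) = s i" if "i \<le> m" for i using that by (auto simp: insp_def ins_def)
  have insne: "ins i \<noteq> Suc k" for i by (auto simp: ins_def)
  have injins: "inj ins" by (auto simp: inj_def ins_def split: if_splits)
  have split: "PR (Suc m) = S0 \<union> (S1 \<union> S2)"
  proof (rule set_eqI, rule iffI)
    fix x assume x: "x \<in> PR (Suc m)"
    obtain i j where ij: "x = (i, j)" "i < j" "j \<le> Suc m" "j \<noteq> i + 1" using x by (auto simp: PR_def)
    show "x \<in> S0 \<union> (S1 \<union> S2)"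
    proof (cases "j = Suc k")
      case True
      then have "i \<in> {0..<k}" using ij by auto
      then have "x \<in> S1" unfolding S1_def using ij True by blast
      then show ?thesis by simp
    next
      case jF: False
      show ?thesis
      proof (cases "i = Suc k")
        case True
        then have "j - 1 \<in> {Suc (Suc k)..m}" "x = (Suc k, Suc (j - 1))" using ij by auto
        then have "x \<in> S2" unfolding S2_def by blast
        then show ?thesis by simp
      next
        case iF: False
        define i' where "i' = (if i \<le> k then i else i - 1)"
        define j' where "j' = (if j \<le> k then j else j - 1)"
        have e1: "ins i' = i"
        proof (cases "i \<le> k")
          case True then show ?thesis by (simp add: ins_def i'_def)
        next
          case False
          then have "\<not> i - 1 \<le> k" "Suc (i - 1) = i" using iF by arith+
          then show ?thesis using False by (simp add: ins_def i'_def)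
        qed
        have e2: "ins j' = j"
        proof (cases "j \<le> k")
          case True then show ?thesis by (simp add: ins_def j'_def)
        next
          case False
          then have "\<not> j - 1 \<le> k" "Suc (j - 1) = j" using jF by arith+
          then show ?thesis using False by (simp add: ins_def j'_def)
        qed
        note e = e1 e2
        have "(i', j') \<in> insert (k, Suc k) (PR m)" using ij iF jF k by (auto simp: PR_def i'_def j'_def)
        then have "(ins i', ins j') \<in> S0" unfolding S0_def by (rule rev_image_eqI) simp
        then show ?thesis using e ij(1) by simp
      qed
    qed
  next
    fix x assume "x \<in> S0 \<union> (S1 \<union> S2)"
    then show "x \<in> PR (Suc m)" using k by (auto simp: S0_def S1_def S2_def PR_def ins_def split: if_splits)
  qed
  have d1: "S0 \<inter> (S1 \<union> S2) = {}" using insne by (auto simp: S0_def S1_def S2_def)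
  have d2: "S1 \<inter> S2 = {}" by (auto simp: S1_def S2_def)
  have fin: "finite S0" "finite S1" "finite S2" by (auto simp: S0_def S1_def S2_def)
  have P0: "(\<Prod>x\<in>S0. ?F x) = (tvar (s (Suc k)) - tvar (s k)) * Ps m s"
  proof -
    have inj0: "inj_on (\<lambda>x. (ins (fst x), ins (snd x))) (insert (k, Suc k) (PR m))"
      using injins by (auto simp: inj_on_def inj_def)
    have "(\<Prod>x\<in>S0. ?F x) = (\<Prod>x\<in>insert (k, Suc k) (PR m). ?F (ins (fst x), ins (snd x)))"
      unfolding S0_def by (subst prod.reindex[OF inj0]) (simp add: comp_def)
    also have "\<dots> = ?F (ins k, ins (Suc k)) * (\<Prod>x\<in>PR m. ?F (ins (fst x), ins (snd x)))"
      using finite_PR[of m] by (subst prod.insert) (auto simp: PR_def)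
    also have "(\<Prod>x\<in>PR m. ?F (ins (fst x), ins (snd x))) = Ps m s"
      unfolding Ps_alt by (rule prod.cong) (auto simp: PR_def pins)
    also have "?F (ins k, ins (Suc k)) = tvar (s (Suc k)) - tvar (s k)"
      using k pins[of k] pins[of "Suc k"] by simp
    finally show ?thesis .
  qed
  have P1: "(\<Prod>x\<in>S1. ?F x) = (\<Prod>i\<in>{0..<k}. tvar (Suc m) - tvar (s i))"
  proof -
    have inj1: "inj_on (\<lambda>i. (i, Suc k)) {0..<k}" by (auto simp: inj_on_def)
    show ?thesis unfolding S1_def by (simp add: prod.reindex[OF inj1] insp_def)
  qed
  have P2: "(\<Prod>x\<in>S2. ?F x) = (-1) ^ (m - Suc k) * (\<Prod>j\<in>{Suc (Suc k)..m}. tvar (Suc m) - tvar (s j))"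
  proof -
    have inj2: "inj_on (\<lambda>j. (Suc k, Suc j)) {Suc (Suc k)..m}" by (auto simp: inj_on_def)
    have "(\<Prod>x\<in>S2. ?F x) = (\<Prod>j\<in>{Suc (Suc k)..m}. - (tvar (Suc m) - tvar (s j)))"
      unfolding S2_def by (simp add: prod.reindex[OF inj2]) (rule prod.cong, auto simp: insp_def)
    also have "\<dots> = (-1) ^ (m - Suc k) * (\<Prod>j\<in>{Suc (Suc k)..m}. tvar (Suc m) - tvar (s j))"
      by (subst prod_uminus) simp
    finally show ?thesis .
  qed
  have P12: "(\<Prod>i\<in>{0..<k}. tvar (Suc m) - tvar (s i)) * (\<Prod>j\<in>{Suc (Suc k)..m}. tvar (Suc m) - tvar (s j))
      = (\<Prod>v\<in>{0..m} - {s k, s (Suc k)}. tvar (Suc m) - tvar v)"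
  proof -
    have "(\<Prod>i\<in>{0..<k}. tvar (Suc m) - tvar (s i)) * (\<Prod>j\<in>{Suc (Suc k)..m}. tvar (Suc m) - tvar (s j))
        = (\<Prod>i\<in>{0..<k} \<union> {Suc (Suc k)..m}. tvar (Suc m) - tvar (s i))"
      by (rule prod.union_disjoint[symmetric]) auto
    also have "\<dots> = (\<Prod>v\<in>s ` ({0..<k} \<union> {Suc (Suc k)..m}). tvar (Suc m) - tvar v)"
      using prod.reindex[OF inj_on_subset[OF pf(1) subset_UNIV], of "\<lambda>v. tvar (Suc m) - tvar v"] by simp
    also have "s ` ({0..<k} \<union> {Suc (Suc k)..m}) = {0..m} - {s k, s (Suc k)}"
    proof -
      have "{0..<k} \<union> {Suc (Suc k)..m} = {0..m} - {k, Suc k}" using k by auto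
      then show ?thesis using image_set_diff[OF pf(1), of "{0..m}" "{k, Suc k}"] perm_img[OF s] by simp
    qed
    finally show ?thesis .
  qed
  have "Ps (Suc m) ?p = (\<Prod>x\<in>S0. ?F x) * ((\<Prod>x\<in>S1. ?F x) * (\<Prod>x\<in>S2. ?F x))"
    unfolding Ps_alt split using fin d1 d2 by (simp add: prod.union_disjoint)
  also have "\<dots> = (-1) ^ (m - Suc k) *
    (Ps m s * ((tvar (s (Suc k)) - tvar (s k)) * (\<Prod>v\<in>{0..m} - {s k, s (Suc k)}. tvar (Suc m) - tvar v)))"
    unfolding P0 P1 P2 P12[symmetric] by (simp add: algebra_simps)
  finally show ?thesis .
qed



lemma span_pm1:
  assumes "x \<in> pspan S" shows "(-1) ^ e * x \<in> pspan S"
proof (cases "even e")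
  case True then show ?thesis using assms by simp
next
  case False then show ?thesis using assms pm.span_neg by simp
qed

lemma L:
  fixes s :: "nat \<Rightarrow> nat"
  assumes s: "s permutes {1..m}" and k: "k \<le> m"
  shows "Ps m s * Qv m (s k) \<in> pspan (Ps (Suc m) ` {s. s permutes {1..Suc m}})"
  using k
proof (induction "m - k" arbitrary: k)
  case 0
  then have "k = m" by simp
  have "s permutes {1..Suc m}" by (rule permutes_subset[OF s]) auto
  then have "Ps (Suc m) s \<in> Ps (Suc m) ` {s. s permutes {1..Suc m}}" by blast
  then have "Ps (Suc m) s \<in> pspan (Ps (Suc m) ` {s. s permutes {1..Suc m}})" by (rule pm.span_base)
  then show ?case using ins_end[OF s] \<open>k = m\<close> by simp
next
  case (Suc d)
  then have k: "Suc k \<le> m" and d: "d = m - Suc k" by auto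
  note pf = perm_facts[OF s]
  have IH: "Ps m s * Qv m (s (Suc k)) \<in> pspan (Ps (Suc m) ` {s. s permutes {1..Suc m}})"
    using Suc.hyps(1)[of "Suc k"] d k by simp
  define a where "a = s k"
  define b where "b = s (Suc k)"
  define X where "X = {0..m} - {a, b}"
  define R where "R = (\<Prod>v\<in>X. tvar (Suc m) - tvar v)"
  have ab: "a \<noteq> b" "a \<le> m" "b \<le> m" unfolding a_def b_def using k pf(1) perm_le'[OF s]
    by (auto dest: injD)
  have fX: "finite X" "a \<notin> X" "b \<notin> X" by (auto simp: X_def)
  have Qa: "Qv m a = (tvar (Suc m) - tvar b) * R"
  proof -
    have e: "{0..m} - {a} = insert b X" using ab by (auto simp: X_def)
    show ?thesis unfolding Qv_def R_def e by (rule prod.insert[OF fX(1) fX(3)])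
  qed
  have Qb: "Qv m b = (tvar (Suc m) - tvar a) * R"
  proof -
    have e: "{0..m} - {b} = insert a X" using ab by (auto simp: X_def)
    show ?thesis unfolding Qv_def R_def e by (rule prod.insert[OF fX(1) fX(2)])
  qed
  have eq: "Ps m s * Qv m a = Ps m s * Qv m b - Ps m s * ((tvar b - tvar a) * R)"
    unfolding Qa Qb by (simp add: algebra_simps)
  have mid: "Ps (Suc m) (insp m k s) = (-1) ^ (m - Suc k) * (Ps m s * ((tvar b - tvar a) * R))"
    using ins_mid[OF s k] unfolding a_def b_def R_def X_def .
  have "Ps (Suc m) (insp m k s) \<in> pspan (Ps (Suc m) ` {s. s permutes {1..Suc m}})"
    using insp_perm[OF s] k by (intro pm.span_base) auto
  then have "(-1) ^ (m - Suc k) * Ps (Suc m) (insp m k s) \<in> pspan (Ps (Suc m) ` {s. s permutes {1..Suc m}})"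
    by (rule span_pm1)
  moreover have "(-1) ^ (m - Suc k) * Ps (Suc m) (insp m k s) = Ps m s * ((tvar b - tvar a) * R)"
  proof -
    have "((-1::rpoly) ^ (m - Suc k)) * (-1) ^ (m - Suc k) = 1"
      by (simp flip: power_mult_distrib)
    then show ?thesis unfolding mid by (simp add: mult.assoc[symmetric])
  qed
  ultimately have "Ps m s * ((tvar b - tvar a) * R) \<in> pspan (Ps (Suc m) ` {s. s permutes {1..Suc m}})"
    by simp
  then show ?case using IH eq pm.span_diff unfolding a_def b_def by metis
qed

lemma leaf_conn:
  assumes only: "\<And>e. e \<in> T \<Longrightarrow> e \<noteq> (a, N) \<Longrightarrow> fst e \<noteq> N \<and> snd e \<noteq> N"
    and aN: "a \<noteq> N" and c: "connects T u v" and u: "u \<noteq> N"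
  shows "(v = N \<longrightarrow> connects (T - {(a, N)}) u a) \<and> (v \<noteq> N \<longrightarrow> connects (T - {(a, N)}) u v)"
proof -
  have "(u, v) \<in> (T \<union> T\<inverse>)\<^sup>*" using c by (simp add: connects_def)
  then show ?thesis
  proof (induction rule: rtrancl_induct)
    case base then show ?case using u by simp
  next
    case (step y z)
    show ?case
    proof (cases "y = N")
      case True
      then have "(z, N) \<in> T \<or> (N, z) \<in> T" using step.hyps(2) by auto
      then have "z = a" using only aN by fastforce
      then show ?thesis using step.IH True aN by simp
    next
      case yN: False
      then have cy: "connects (T - {(a, N)}) u y" using step.IH by simp
      show ?thesis
      proof (cases "z = N")
        case True
        then have "(y, N) \<in> T \<or> (N, y) \<in> T" using step.hyps(2) by auto
        then have "y = a" using only yN by fastforce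
        then show ?thesis using cy True by simp
      next
        case zN: False
        from step.hyps(2) have "(y, z) \<in> T \<or> (z, y) \<in> T" by blast
        then have "connects (T - {(a, N)}) y z"
        proof
          assume "(y, z) \<in> T"
          moreover have "(y, z) \<noteq> (a, N)" using zN by simp
          ultimately have "(y, z) \<in> T - {(a, N)}" by simp
          then show ?thesis by (rule connects_edge)
        next
          assume "(z, y) \<in> T"
          moreover have "(z, y) \<noteq> (a, N)" using yN by simp
          ultimately have "(z, y) \<in> T - {(a, N)}" by simp
          then show ?thesis by (rule connects_edge)
        qed
        then show ?thesis using cy zN connects_trans by blast
      qed
    qed
  qed
qed

lemma tri_tree:
  assumes T: "spanning_tree n T" and un: "(u, n) \<in> T" and wn: "(w, n) \<in> T" and uw: "u \<noteq> w"
    and pq: "(p, q) \<in> cedges n" "(p, q) \<notin> T" "(p = u \<and> q = w) \<or> (p = w \<and> q = u)"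
  shows "spanning_tree n (insert (p, q) (T - {(u, n)}))"
proof -
  let ?T1 = "insert (p, q) (T - {(u, n)})"
  have sub: "T \<subseteq> cedges n" and conn: "\<forall>x\<in>{0..n}. \<forall>y\<in>{0..n}. connects T x y"
    and acyc: "\<And>i j. (i, j) \<in> T \<Longrightarrow> \<not> connects (T - {(i, j)}) i j"
    using T unfolding spanning_tree_def by auto
  have wnu: "(w, n) \<noteq> (u, n)" using uw by simp
  have cuw: "connects S u w" if "(p, q) \<in> S" for S
    using pq(3) connects_edge[OF that] by auto
  have cwu: "connects S w u" if "(p, q) \<in> S" for S
    using pq(3) connects_edge[OF that] by auto
  have sub1: "?T1 \<subseteq> cedges n" using sub pq(1) by auto
  have conn1: "connects ?T1 x y" if "x \<in> {0..n}" "y \<in> {0..n}" for x y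
  proof (rule connects_subst[of T])
    show "connects T x y" using conn that by blast
    fix a b assume ab: "(a, b) \<in> T"
    show "connects ?T1 a b"
    proof (cases "(a, b) = (u, n)")
      case True
      have "connects ?T1 u w" by (rule cuw) simp
      moreover have "connects ?T1 w n" using wn wnu by (intro connects_edge) auto
      ultimately show ?thesis using True connects_trans by blast
    next
      case False then show ?thesis using ab by (intro connects_edge) auto
    qed
  qed
  have acyc1: "\<not> connects (?T1 - {(x, y)}) x y" if xy: "(x, y) \<in> ?T1" for x y
  proof
    assume c: "connects (?T1 - {(x, y)}) x y"
    show False
    proof (cases "(x, y) = (p, q)")
      case True
      then have "?T1 - {(x, y)} = T - {(u, n)}" using pq(2) by auto
      then have c': "connects (T - {(u, n)}) p q" using c True by simp
      then have "connects (T - {(u, n)}) u w" using pq(3) connects_sym by blast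
      moreover have "connects (T - {(u, n)}) w n" using wn wnu by (intro connects_edge) auto
      ultimately have "connects (T - {(u, n)}) u n" using connects_trans by blast
      then show False using acyc[OF un] by simp
    next
      case False
      then have xyT: "(x, y) \<in> T" "(x, y) \<noteq> (u, n)" using xy by auto
      define S where "S = T - {(u, n)} - {(x, y)}"
      have "?T1 - {(x, y)} = insert (p, q) S" using False by (auto simp: S_def)
      then have "connects (insert (p, q) S) x y" using c by simp
      then have cases: "connects S x y \<or> (connects S x p \<and> connects S q y) \<or> (connects S x q \<and> connects S p y)"
        by (rule connects_insert)
      have S1: "S \<subseteq> T - {(x, y)}" "S \<subseteq> T - {(u, n)}" by (auto simp: S_def)
      have nc: "\<not> connects (T - {(x, y)}) x y" by (rule acyc[OF xyT(1)])
      have "connects S x y \<or> (connects S x u \<and> connects S w y) \<or> (connects S x w \<and> connects S u y)"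
        using cases pq(3) by blast
      then show False
      proof (elim disjE conjE)
        assume "connects S x y"
        then show False using nc connects_mono[OF S1(1)] by blast
      next
        assume h: "connects S x u" "connects S w y"
        show False
        proof (cases "(x, y) = (w, n)")
          case True
          have "connects (T - {(w, n)}) w u" using h(1) True connects_mono[OF S1(1)] by auto
          moreover have "connects (T - {(w, n)}) u n" using un wnu by (intro connects_edge) auto
          ultimately have "connects (T - {(w, n)}) w n" using connects_trans by blast
          then show False using acyc[OF wn] by simp
        next
          case False
          have "connects (T - {(x, y)}) u n" using un xyT(2) by (intro connects_edge) auto
          moreover have "connects (T - {(x, y)}) n w" using wn False by (intro connects_edge) auto
          ultimately have "connects (T - {(x, y)}) u w" using connects_trans by blast
          then have "connects (T - {(x, y)}) x y"
            using h connects_mono[OF S1(1)] connects_trans by blast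
          then show False using nc by simp
        qed
      next
        assume h: "connects S x w" "connects S u y"
        show False
        proof (cases "(x, y) = (w, n)")
          case True
          have "connects (T - {(u, n)}) u n" using h(2) True connects_mono[OF S1(2)] by auto
          then show False using acyc[OF un] by simp
        next
          case False
          have "connects (T - {(x, y)}) w n" using wn False by (intro connects_edge) auto
          moreover have "connects (T - {(x, y)}) n u" using un xyT(2) by (intro connects_edge) auto
          ultimately have "connects (T - {(x, y)}) w u" using connects_trans by blast
          then have "connects (T - {(x, y)}) x y"
            using h connects_mono[OF S1(1)] connects_trans by blast
          then show False using nc by simp
        qed
      qed
    qed
  qed
  show ?thesis unfolding spanning_tree_def using sub1 conn1 acyc1 by blast
qed



lemma pY_insert: "finite R \<Longrightarrow> x \<notin> R \<Longrightarrow> pY (insert x R) = (tvar (snd x) - tvar (fst x)) * pY R"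
  unfolding pY_alt by simp

lemma main_span:
  "spanning_tree n T \<Longrightarrow> pY (cedges n - T) \<in> pspan (Ps n ` {s. s permutes {1..n}})"
proof (induction n arbitrary: T)
  case 0
  have "cedges 0 = {}" by (auto simp: cedges_def)
  then have e: "pY (cedges 0 - T) = 1" by (simp add: pY_def)
  have "PR 0 = {}" by (auto simp: PR_def)
  then have "Ps 0 id = 1" by (simp add: Ps_alt)
  moreover have "id permutes {1..(0::nat)}" by (simp add: permutes_id)
  ultimately have "1 \<in> Ps 0 ` {s. s permutes {1..0}}" by (metis image_eqI mem_Collect_eq)
  then show ?case unfolding e by (rule pm.span_base)
next
  case (Suc m)
  let ?n = "Suc m"
  let ?S = "pspan (Ps ?n ` {s. s permutes {1..?n}})"
  have step: "\<forall>T. spanning_tree ?n T \<longrightarrow> card {e\<in>T. snd e = ?n} = d \<longrightarrow> pY (cedges ?n - T) \<in> ?S" for d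
  proof (induction d rule: less_induct)
    case (less d)
    show ?case
    proof (intro allI impI)
      fix T assume T: "spanning_tree ?n T" and d: "card {e\<in>T. snd e = ?n} = d"
      have sub: "T \<subseteq> cedges ?n" and conn: "\<forall>x\<in>{0..?n}. \<forall>y\<in>{0..?n}. connects T x y"
        and acyc: "\<And>i j. (i, j) \<in> T \<Longrightarrow> \<not> connects (T - {(i, j)}) i j"
        using T unfolding spanning_tree_def by auto
      have finT: "finite T" using sub finite_subset finite_cedges by blast
      let ?I = "{e\<in>T. snd e = ?n}"
      have finI: "finite ?I" using finT by simp
      have nofst: "fst e \<noteq> ?n" if "e \<in> T" for e
        using that sub by (auto simp: cedges_def)
      consider "d = 0" | "d = 1" | "2 \<le> d" by linarith
      then show "pY (cedges ?n - T) \<in> ?S"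
      proof cases
        case 1
        have "connects T 0 ?n" using conn by auto
        then obtain e where "e \<in> T" "fst e = ?n \<or> snd e = ?n" using connects_touch by fastforce
        then have "e \<in> ?I" using nofst by auto
        then have "?I \<noteq> {}" by blast
        then have "card ?I \<noteq> 0" using finI by simp
        then show ?thesis using 1 d by simp
      next
        case 2
        then obtain e0 where I: "?I = {e0}" using d card_1_singletonE by metis
        define a where "a = fst e0"
        have e0T: "e0 \<in> T" "snd e0 = ?n" using I by auto
        then have e0: "e0 = (a, ?n)" unfolding a_def by (cases e0) auto
        have aT: "(a, ?n) \<in> T" using e0T e0 by simp
        have a: "a < ?n" using aT sub by (auto simp: cedges_def)
        define T' where "T' = T - {(a, ?n)}"
        have only: "fst e \<noteq> ?n \<and> snd e \<noteq> ?n" if "e \<in> T" "e \<noteq> (a, ?n)" for e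
          using that nofst I e0 by auto
        have T'sub: "T' \<subseteq> cedges m"
        proof
          fix e assume "e \<in> T'"
          then have "e \<in> cedges ?n" "snd e \<noteq> ?n" using sub only unfolding T'_def by auto
          then show "e \<in> cedges m" by (auto simp: cedges_def)
        qed
        have T'conn: "\<forall>x\<in>{0..m}. \<forall>y\<in>{0..m}. connects T' x y"
        proof (intro ballI)
          fix x y assume xy: "x \<in> {0..m}" "y \<in> {0..m}"
          then have "connects T x y" using conn by auto
          then show "connects T' x y" unfolding T'_def
            using leaf_conn[of T a ?n x y] only a xy by auto
        qed
        have T'acyc: "\<forall>(i, j)\<in>T'. \<not> connects (T' - {(i, j)}) i j"
        proof (intro ballI, clarify)
          fix i j assume ij: "(i, j) \<in> T'" and c: "connects (T' - {(i, j)}) i j"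
          have "connects (T - {(i, j)}) i j" by (rule connects_mono[OF _ c]) (auto simp: T'_def)
          then show False using acyc ij unfolding T'_def by auto
        qed
        have T'tree: "spanning_tree m T'" unfolding spanning_tree_def using T'sub T'conn T'acyc by blast
        have IH: "pY (cedges m - T') \<in> pspan (Ps m ` {s. s permutes {1..m}})" by (rule Suc.IH[OF T'tree])
        have decomp: "pY (cedges ?n - T) = pY (cedges m - T') * Qv m a"
        proof -
          let ?B = "(\<lambda>v. (v, ?n)) ` ({0..m} - {a})"
          have seteq: "cedges ?n - T = (cedges m - T') \<union> ?B"
          proof (rule set_eqI, rule iffI)
            fix x assume x: "x \<in> cedges ?n - T"
            obtain i j where ij: "x = (i, j)" "i < j" "j \<le> ?n" using x by (auto simp: cedges_def)
            show "x \<in> (cedges m - T') \<union> ?B"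
            proof (cases "j = ?n")
              case True
              then have "i \<noteq> a" using x ij aT by auto
              then have "i \<in> {0..m} - {a}" using ij True by auto
              then show ?thesis using ij True by blast
            next
              case False
              then show ?thesis using x ij by (auto simp: cedges_def T'_def)
            qed
          next
            fix x assume x: "x \<in> (cedges m - T') \<union> ?B"
            show "x \<in> cedges ?n - T"
            proof (cases "x \<in> ?B")
              case True
              then obtain v where v0: "v \<in> {0..m} - {a}" "x = (v, ?n)" by blast
              then have v: "x = (v, ?n)" "v \<le> m" "v \<noteq> a" by auto
              have "x \<notin> T"
              proof
                assume "x \<in> T"
                then show False using only[of x] v by simp
              qed
              then show ?thesis using v by (auto simp: cedges_def)
            next
              case False
              then have "x \<in> cedges m" "x \<notin> T'" using x by auto
              moreover have "x \<noteq> (a, ?n)" using \<open>x \<in> cedges m\<close> by (auto simp: cedges_def)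
              ultimately show ?thesis by (auto simp: cedges_def T'_def)
            qed
          qed
          have disj: "(cedges m - T') \<inter> ?B = {}" by (auto simp: cedges_def)
          have inj: "inj_on (\<lambda>v. (v, ?n)) ({0..m} - {a})" by (auto simp: inj_on_def)
          have "pY (cedges ?n - T) = pY (cedges m - T') * (\<Prod>x\<in>?B. tvar (snd x) - tvar (fst x))"
            unfolding seteq pY_alt by (rule prod.union_disjoint) (auto simp: disj)
          also have "(\<Prod>x\<in>?B. tvar (snd x) - tvar (fst x)) = Qv m a"
            unfolding Qv_def by (simp add: prod.reindex[OF inj])
          finally show ?thesis .
        qed
        have "pY (cedges m - T') * Qv m a \<in> ?S"
        proof (rule span_mult[OF IH])
          fix y assume "y \<in> Ps m ` {s. s permutes {1..m}}"
          then obtain s where s: "s permutes {1..m}" "y = Ps m s" by blast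
          have "s (inv s a) = a" using perm_facts(4)[OF s(1)] .
          moreover have "inv s a \<le> m" using a perm_le'[OF perm_facts(5)[OF s(1)], of a] by simp
          ultimately show "y * Qv m a \<in> ?S" using L[OF s(1), of "inv s a"] s(2) by simp
        qed
        then show ?thesis using decomp by simp
      next
        case 3
        then have c2: "2 \<le> card ?I" using d by simp
        have "\<not> card ?I \<le> Suc 0" using c2 by simp
        then obtain e1 e2 where e1: "e1 \<in> ?I" and e2: "e2 \<in> ?I" "e2 \<noteq> e1"
          using card_le_Suc0_iff_eq[OF finI] by blast
        define a where "a = min (fst e1) (fst e2)"
        define b where "b = max (fst e1) (fst e2)"
        have e1f: "e1 = (fst e1, ?n)" using e1 by (cases e1) auto
        have e2f: "e2 = (fst e2, ?n)" using e2 by (cases e2) auto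
        have "fst e1 \<noteq> fst e2" using e1f e2f e2(2) by metis
        then have ab: "a < b" unfolding a_def b_def by auto
        have aT: "(a, ?n) \<in> T" and bT: "(b, ?n) \<in> T"
          using e1 e2 e1f e2f unfolding a_def b_def by (auto simp: min_def max_def)
        have bn: "b < ?n" using bT sub by (auto simp: cedges_def)
        have abc: "(a, b) \<in> cedges ?n" using ab bn by (auto simp: cedges_def)
        have abT: "(a, b) \<notin> T"
        proof
          assume "(a, b) \<in> T"
          then have "connects (T - {(a, ?n)}) a b" using ab bn by (intro connects_edge) auto
          moreover have "connects (T - {(a, ?n)}) b ?n" using bT ab by (intro connects_edge) auto
          ultimately have "connects (T - {(a, ?n)}) a ?n" using connects_trans by blast
          then show False using acyc[OF aT] by simp
        qed
        define T1 where "T1 = insert (a, b) (T - {(a, ?n)})"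
        define T2 where "T2 = insert (a, b) (T - {(b, ?n)})"
        have t1: "spanning_tree ?n T1" unfolding T1_def
          by (rule tri_tree[OF T aT bT]) (use ab abc abT in auto)
        have t2: "spanning_tree ?n T2" unfolding T2_def
          by (rule tri_tree[OF T bT aT]) (use ab abc abT in auto)
        have I1: "{e\<in>T1. snd e = ?n} = ?I - {(a, ?n)}" using bn by (auto simp: T1_def)
        have I2: "{e\<in>T2. snd e = ?n} = ?I - {(b, ?n)}" using bn by (auto simp: T2_def)
        have c1: "card {e\<in>T1. snd e = ?n} = d - 1" unfolding I1 using aT finI d by simp
        have c2': "card {e\<in>T2. snd e = ?n} = d - 1" unfolding I2 using bT finI d by simp
        have P1: "pY (cedges ?n - T1) \<in> ?S" using less.IH[of "d - 1"] 3 t1 c1 by simp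
        have P2: "pY (cedges ?n - T2) \<in> ?S" using less.IH[of "d - 1"] 3 t2 c2' by simp
        define R where "R = cedges ?n - T - {(a, b)}"
        have finR: "finite R" by (simp add: R_def)
        have E0: "cedges ?n - T = insert (a, b) R" using abc abT by (auto simp: R_def)
        have E1: "cedges ?n - T1 = insert (a, ?n) R" using aT sub abT by (auto simp: R_def T1_def)
        have E2: "cedges ?n - T2 = insert (b, ?n) R" using bT sub abT by (auto simp: R_def T2_def)
        have nR: "(a, b) \<notin> R" "(a, ?n) \<notin> R" "(b, ?n) \<notin> R" using aT bT by (auto simp: R_def)
        have "pY (cedges ?n - T) = pY (cedges ?n - T1) - pY (cedges ?n - T2)"
          unfolding E0 E1 E2 pY_insert[OF finR nR(1)] pY_insert[OF finR nR(2)] pY_insert[OF finR nR(3)]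
          by (simp add: algebra_simps)
        then show ?thesis using P1 P2 pm.span_diff by simp
      qed
    qed
  qed
  then show ?case using Suc.prems by blast
qed

theorem corollary3p2:
  fixes n :: nat
  shows "inj_on (Ps n) {s. s permutes {1..n}}
    \<and> \<not> pdependent (Ps n ` {s. s permutes {1..n}})
    \<and> pspan (Ps n ` {s. s permutes {1..n}})
        = pspan {pY (cedges n - T) | T. spanning_tree n T}"
proof (intro conjI)
  show "inj_on (Ps n) {s. s permutes {1..n}}" by (rule Ps_inj)
  show "\<not> pdependent (Ps n ` {s. s permutes {1..n}})" by (rule Ps_indep)
  show "pspan (Ps n ` {s. s permutes {1..n}}) = pspan {pY (cedges n - T) | T. spanning_tree n T}"
  proof (rule antisym)
    show "pspan (Ps n ` {s. s permutes {1..n}}) \<subseteq> pspan {pY (cedges n - T) | T. spanning_tree n T}"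
    proof -
      have sub1: "Ps n ` {s. s permutes {1..n}} \<subseteq> pspan {pY (cedges n - T) | T. spanning_tree n T}"
      proof
        fix y assume "y \<in> Ps n ` {s. s permutes {1..n}}"
        then obtain s where "s permutes {1..n}" "y = Ps n s" by blast
        then show "y \<in> pspan {pY (cedges n - T) | T. spanning_tree n T}" using Ps_in_span by simp
      qed
      show ?thesis using pm.span_minimal[OF sub1 pm.subspace_span] .
    qed
    have sub: "{pY (cedges n - T) | T. spanning_tree n T} \<subseteq> pspan (Ps n ` {s. s permutes {1..n}})"
    proof
      fix y assume "y \<in> {pY (cedges n - T) | T. spanning_tree n T}"
      then obtain T where "spanning_tree n T" "y = pY (cedges n - T)" by blast
      then show "y \<in> pspan (Ps n ` {s. s permutes {1..n}})" using main_span by simp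
    qed
    show "pspan {pY (cedges n - T) | T. spanning_tree n T} \<subseteq> pspan (Ps n ` {s. s permutes {1..n}})"
      using pm.span_minimal[OF sub pm.subspace_span] .
  qed
qed


end
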